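(* If $G$ is a countable group, then the number of ends of $G$ is either infinite or at most $2$.
   Context: For a countable group $G$ equipped with a proper left-invariant metric (balls finite, $d(gh_1,gh_2)=d(h_1,h_2)$; any two such metrics are coarsely equivalent via the identity), the number of ends of $G$ is the cardinality of $CF(G)\setminus G$, where for a proper metric space $X$, $CF(X)$ is the compactification induced by all continuous glacially oscillating functions $X\to[0,1]$. A glacial scale on $X$ is a sequence $\mathcal S=\{(K_i,n_i)\}_{i\ge1}$, $K_i$ bounded, $n_i\in\mathbb N$, such that for every bounded $K$ and $r>0$ there is $i$ with $K\subset K_i$, $n_i>r$; an $\mathcal S$-chain is a finite sequence $x_1,\dots,x_n$ with, for each $i\le n-1$, some $m$ with $x_i,x_{i+1}\notin K_m$ and $d(x_i,x_{i+1})\le n_m$; $f$ is glacially oscillating if for every $\epsilon>0$ there is a glacial scale $\mathcal S$ with $|f(x_1)-f(x_n)|<\epsilon$ for all $\mathcal S$-chains. Equivalently, the number of ends of an infinite $G$ is the supremum of $n$ such that $G$ contains $n$ pairwise disjoint infinite almost invariant subsets ($A$ is almost invariant if $A\,\Delta\,(A g)$ is finite for all $g\in G$). *)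

theory Defs
  imports "HOL-Algebra.Coset" "HOL-Library.Extended_Nat"
begin

definition almost_invariant :: "('a, 'b) monoid_scheme \<Rightarrow> 'a set \<Rightarrow> bool" where
  "almost_invariant G A \<longleftrightarrow> A \<subseteq> carrier G \<and>
     (\<forall>g \<in> carrier G. finite ((A - (A #>\<^bsub>G\<^esub> g)) \<union> ((A #>\<^bsub>G\<^esub> g) - A)))"

definition num_ends :: "('a, 'b) monoid_scheme \<Rightarrow> enat" where
  "num_ends G = (if finite (carrier G) then 0 else
     Sup {enat n | n. \<exists>A :: nat \<Rightarrow> 'a set.
        (\<forall>i<n. almost_invariant G (A i) \<and> infinite (A i)) \<and>
        (\<forall>i<n. \<forall>j<n. i \<noteq> j \<longrightarrow> A i \<inter> A j = {})})"

end

theory Submission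
  imports Defs "HOL-Library.Countable_Set" "HOL-Library.Infinite_Set"
begin


context group
begin

definition eT :: "nat \<Rightarrow> 'a set" where
  "eT n = from_nat_into (carrier G) ` {..n} \<union> (\<lambda>k. inv (from_nat_into (carrier G) k)) ` {..n}"

definition eprod :: "'a list \<Rightarrow> 'a" where
  "eprod xs = foldr (\<otimes>) xs \<one>"

definition eW :: "nat \<Rightarrow> 'a set" where
  "eW n = eprod ` {xs. set xs \<subseteq> eT n \<and> length xs \<le> n}"

lemma eT_carrier: "eT n \<subseteq> carrier G"
proof -
  have ne: "carrier G \<noteq> {}" using one_closed by blast
  show ?thesis unfolding eT_def using from_nat_into[OF ne] by auto
qed

lemma eT_mono: "m \<le> n \<Longrightarrow> eT m \<subseteq> eT n"
  unfolding eT_def by auto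

lemma eT_inv: "x \<in> eT n \<Longrightarrow> inv x \<in> eT n"
proof -
  have ne: "carrier G \<noteq> {}" using one_closed by blast
  assume "x \<in> eT n" then show ?thesis
    unfolding eT_def using from_nat_into[OF ne] by (auto simp: inv_inv)
qed

lemma eprod_closed: "set xs \<subseteq> carrier G \<Longrightarrow> eprod xs \<in> carrier G"
  by (induct xs) (auto simp: eprod_def)

lemma eprod_append: "set xs \<subseteq> carrier G \<Longrightarrow> set ys \<subseteq> carrier G \<Longrightarrow>
   eprod (xs @ ys) = eprod xs \<otimes> eprod ys"
proof (induct xs)
  case Nil then show ?case by (simp add: eprod_def eprod_closed[unfolded eprod_def])
next
  case (Cons x xs)
  then show ?case
    using eprod_closed[of xs] eprod_closed[of ys]
    by (simp add: eprod_def m_assoc)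
qed

lemma eprod_inv: "set xs \<subseteq> carrier G \<Longrightarrow> inv (eprod xs) = eprod (rev (map (\<lambda>z. inv z) xs))"
proof (induct xs)
  case Nil then show ?case by (simp add: eprod_def)
next
  case (Cons x xs)
  have c: "set (rev (map (\<lambda>z. inv z) xs)) \<subseteq> carrier G" using Cons by auto
  have "inv (eprod (x # xs)) = inv (x \<otimes> eprod xs)" by (simp add: eprod_def)
  also have "\<dots> = inv (eprod xs) \<otimes> inv x" using Cons eprod_closed[of xs] by (simp add: inv_mult_group)
  also have "\<dots> = eprod (rev (map (\<lambda>z. inv z) xs)) \<otimes> eprod [inv x]"
    using Cons by (simp add: eprod_def)
  also have "\<dots> = eprod (rev (map (\<lambda>z. inv z) xs) @ [inv x])"
    using c Cons by (simp add: eprod_append)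
  finally show ?case by simp
qed

lemma eT_finite: "finite (eT n)"
  unfolding eT_def by simp

lemma eW_finite: "finite (eW n)"
  unfolding eW_def using finite_lists_length_le[OF eT_finite] by (rule finite_imageI)

lemma eW_carrier: "eW n \<subseteq> carrier G"
proof
  fix x assume "x \<in> eW n"
  then obtain xs where "set xs \<subseteq> eT n" "x = eprod xs" unfolding eW_def by blast
  then show "x \<in> carrier G" using eT_carrier eprod_closed by (meson subset_trans)
qed

lemma eW_mono: assumes "m \<le> n" shows "eW m \<subseteq> eW n"
proof
  fix x assume "x \<in> eW m"
  then obtain xs where xs: "set xs \<subseteq> eT m" "length xs \<le> m" "x = eprod xs" unfolding eW_def by blast
  have "set xs \<subseteq> eT n" using xs(1) eT_mono[OF assms] by (rule subset_trans)
  moreover have "length xs \<le> n" using xs(2) assms by linarith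
  ultimately show "x \<in> eW n" unfolding eW_def using xs(3) by blast
qed

lemma eW_mult: "x \<in> eW m \<Longrightarrow> y \<in> eW n \<Longrightarrow> x \<otimes> y \<in> eW (m + n)"
proof -
  assume "x \<in> eW m" "y \<in> eW n"
  then obtain xs ys where xs: "set xs \<subseteq> eT m" "length xs \<le> m" "x = eprod xs"
    and ys: "set ys \<subseteq> eT n" "length ys \<le> n" "y = eprod ys"
    unfolding eW_def by blast
  have s1: "set xs \<subseteq> eT (m + n)" using xs(1) eT_mono[of m "m+n"] by simp
  have s2: "set ys \<subseteq> eT (m + n)" using ys(1) eT_mono[of n "m+n"] by simp
  have "set (xs @ ys) \<subseteq> eT (m + n)" using s1 s2 by simp
  moreover have "length (xs @ ys) \<le> m + n" using xs(2) ys(2) by simp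
  moreover have "x \<otimes> y = eprod (xs @ ys)"
  proof -
    have c1: "set xs \<subseteq> carrier G" using xs(1) eT_carrier by (rule subset_trans)
    have c2: "set ys \<subseteq> carrier G" using ys(1) eT_carrier by (rule subset_trans)
    show ?thesis using eprod_append[OF c1 c2] xs(3) ys(3) by simp
  qed
  ultimately show ?thesis unfolding eW_def by blast
qed

lemma eW_inv: "x \<in> eW n \<Longrightarrow> inv x \<in> eW n"
proof -
  assume "x \<in> eW n"
  then obtain xs where xs: "set xs \<subseteq> eT n" "length xs \<le> n" "x = eprod xs"
    unfolding eW_def by blast
  have c1: "set xs \<subseteq> carrier G" using xs(1) eT_carrier by (rule subset_trans)
  have "inv x = eprod (rev (map (\<lambda>z. inv z) xs))" using eprod_inv[OF c1] xs(3) by simp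
  moreover have "set (rev (map (\<lambda>z. inv z) xs)) \<subseteq> eT n" using xs(1) eT_inv by auto
  moreover have "length (rev (map (\<lambda>z. inv z) xs)) \<le> n" using xs(2) by simp
  ultimately show ?thesis unfolding eW_def by blast
qed

lemma eW_zero: "eW 0 = {\<one>}"
  unfolding eW_def by (auto simp: eprod_def)

lemma eW_cover:
  assumes "countable (carrier G)" "x \<in> carrier G" shows "\<exists>n. x \<in> eW n"
proof -
  obtain k where k: "from_nat_into (carrier G) k = x" using from_nat_into_surj[OF assms] by blast
  have "x \<in> from_nat_into (carrier G) ` {..Suc k}" using k by (intro image_eqI[where x=k]) auto
  then have "x \<in> eT (Suc k)" unfolding eT_def by blast
  then have "set [x] \<subseteq> eT (Suc k) \<and> length [x] \<le> Suc k" by simp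
  then have "eprod [x] \<in> eW (Suc k)" unfolding eW_def by (intro imageI) simp
  moreover have "eprod [x] = x" using assms(2) by (simp add: eprod_def)
  ultimately show ?thesis by metis
qed

definition enrm :: "'a \<Rightarrow> nat" where
  "enrm x = (LEAST n. x \<in> eW n)"

lemma enrm_iff:
  assumes "countable (carrier G)" "x \<in> carrier G"
  shows "x \<in> eW n \<longleftrightarrow> enrm x \<le> n"
proof
  assume "x \<in> eW n" then show "enrm x \<le> n" unfolding enrm_def by (rule Least_le)
next
  assume "enrm x \<le> n"
  moreover have "x \<in> eW (enrm x)" unfolding enrm_def
    using eW_cover[OF assms] by (rule LeastI_ex)
  ultimately show "x \<in> eW n" using eW_mono by blast
qed

lemma exists_norm:
  assumes "countable (carrier G)"
  shows "\<exists>nrm :: 'a \<Rightarrow> nat. (\<forall>x\<in>carrier G. nrm (inv x) = nrm x)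
     \<and> (\<forall>x\<in>carrier G. \<forall>y\<in>carrier G. nrm (x \<otimes> y) \<le> nrm x + nrm y)
     \<and> (\<forall>n. finite {x\<in>carrier G. nrm x \<le> n})
     \<and> (\<forall>x\<in>carrier G. nrm x = 0 \<longrightarrow> x = \<one>)"
proof (intro exI[of _ enrm] conjI ballI allI impI)
  fix x assume x: "x \<in> carrier G"
  have "inv x \<in> eW (enrm x)" using enrm_iff[OF assms x] eW_inv by blast
  then have a: "enrm (inv x) \<le> enrm x" using enrm_iff[OF assms] x by blast
  have "x \<in> eW (enrm (inv x))" using enrm_iff[OF assms, of "inv x"] x eW_inv[of "inv x"] by (auto simp: inv_inv)
  then have "enrm x \<le> enrm (inv x)" using enrm_iff[OF assms] x by blast
  then show "enrm (inv x) = enrm x" using a by simp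
next
  fix x y assume x: "x \<in> carrier G" and y: "y \<in> carrier G"
  have "x \<otimes> y \<in> eW (enrm x + enrm y)" using eW_mult enrm_iff[OF assms] x y by blast
  then show "enrm (x \<otimes> y) \<le> enrm x + enrm y" using enrm_iff[OF assms] x y by blast
next
  fix n
  have "{x\<in>carrier G. enrm x \<le> n} \<subseteq> eW n" using enrm_iff[OF assms] by blast
  then show "finite {x\<in>carrier G. enrm x \<le> n}" using eW_finite finite_subset by blast
next
  fix x assume x: "x \<in> carrier G" and "enrm x = 0"
  then have "x \<in> eW 0" using enrm_iff[OF assms x] by simp
  then show "x = \<one>" using eW_zero by simp
qed

end


context group
begin

lemma rcos_img: "A #> g = (\<lambda>h. h \<otimes> g) ` A"
  unfolding r_coset_def by auto

lemma ai_fin1: "almost_invariant G A \<Longrightarrow> g \<in> carrier G \<Longrightarrow> finite ((A #> g) - A)"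
  unfolding almost_invariant_def by auto

lemma ai_fin2: "almost_invariant G A \<Longrightarrow> g \<in> carrier G \<Longrightarrow> finite (A - (A #> g))"
  unfolding almost_invariant_def by auto

lemma exists_rho:
  fixes nrm :: "'a \<Rightarrow> nat" and A :: "nat \<Rightarrow> 'a set"
  assumes nfin: "\<And>n. finite {x\<in>carrier G. nrm x \<le> n}"
    and nzero: "\<And>x. x \<in> carrier G \<Longrightarrow> nrm x = 0 \<Longrightarrow> x = \<one>"
    and ai: "\<And>i. i < N \<Longrightarrow> almost_invariant G (A i)"
  shows "\<exists>rho. mono rho \<and> (\<forall>t. rho t \<le> t) \<and> (\<forall>n. \<exists>t. n \<le> rho t) \<and>
     (\<forall>x\<in>carrier G. \<forall>w\<in>carrier G. nrm w \<le> rho (nrm x) \<longrightarrow> (\<forall>i<N. (x \<otimes> w \<in> A i) = (x \<in> A i)))"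
proof -
  define ball where "ball n = {x\<in>carrier G. nrm x \<le> n}" for n
  define Bd where "Bd n = {x\<in>carrier G. \<exists>w\<in>ball n. \<exists>i<N. (x \<otimes> w \<in> A i) \<noteq> (x \<in> A i)}" for n
  have finBd: "finite (Bd n)" for n
  proof -
    let ?U = "\<Union>w\<in>ball n. \<Union>i\<in>{..<N}. ((\<lambda>y. y \<otimes> inv w) ` ((A i #> w) - A i) \<union> ((A i #> inv w) - A i))"
    have "finite ?U"
    proof (intro finite_UN_I)
      show "finite (ball n)" unfolding ball_def by (rule nfin)
      show "finite {..<N}" by simp
      fix w i assume w: "w \<in> ball n" and i: "i \<in> {..<N}"
      have wc: "w \<in> carrier G" using w unfolding ball_def by simp
      have aii: "almost_invariant G (A i)" using ai i by simp
      show "finite ((\<lambda>y. y \<otimes> inv w) ` ((A i #> w) - A i) \<union> ((A i #> inv w) - A i))"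
        using ai_fin1[OF aii wc] ai_fin1[OF aii inv_closed[OF wc]] by simp
    qed
    moreover have "Bd n \<subseteq> ?U"
    proof
      fix x assume "x \<in> Bd n"
      then obtain w i where x: "x \<in> carrier G" and w: "w \<in> ball n" and i: "i < N"
        and d: "(x \<otimes> w \<in> A i) \<noteq> (x \<in> A i)" unfolding Bd_def by blast
      have wc: "w \<in> carrier G" using w unfolding ball_def by simp
      have xe: "x = (x \<otimes> w) \<otimes> inv w" using x wc by (simp add: m_assoc)
      show "x \<in> ?U"
      proof (cases "x \<in> A i")
        case True
        then have "x \<otimes> w \<in> (A i #> w) - A i" using d by (auto simp: rcos_img)
        then have "x \<in> (\<lambda>y. y \<otimes> inv w) ` ((A i #> w) - A i)" using xe by blast
        then show ?thesis using w i by blast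
      next
        case False
        then have "x \<otimes> w \<in> A i" using d by simp
        then have "x \<in> A i #> inv w" using xe by (auto simp: rcos_img)
        then have "x \<in> (A i #> inv w) - A i" using False by simp
        then show ?thesis using w i by blast
      qed
    qed
    ultimately show ?thesis by (rule finite_subset[rotated])
  qed
  define M where "M n = Max (insert 0 (nrm ` Bd n))" for n
  have M: "x \<in> Bd n \<Longrightarrow> nrm x \<le> M n" for x n
    unfolding M_def using finBd by (intro Max_ge) auto
  define S where "S t = {n. n \<le> t \<and> (\<forall>k. 1 \<le> k \<and> k \<le> n \<longrightarrow> M k < t)}" for t
  define rho where "rho t = Max (S t)" for t
  have Sfin: "finite (S t)" for t unfolding S_def by (rule finite_subset[of _ "{..t}"]) auto
  have S0: "0 \<in> S t" for t unfolding S_def by simp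
  have rhoS: "rho t \<in> S t" for t unfolding rho_def using Sfin S0 by (intro Max_in) auto
  have rhoge: "n \<in> S t \<Longrightarrow> n \<le> rho t" for n t unfolding rho_def using Sfin by (rule Max_ge)
  have "mono rho"
  proof (rule monoI)
    fix t t' :: nat assume "t \<le> t'"
    then have "S t \<subseteq> S t'" unfolding S_def by auto
    then show "rho t \<le> rho t'" unfolding rho_def using Sfin S0 by (intro Max_mono) auto
  qed
  moreover have "\<forall>t. rho t \<le> t" using rhoS unfolding S_def by blast
  moreover have "\<forall>n. \<exists>t. n \<le> rho t"
  proof
    fix n
    define t where "t = Suc (n + (\<Sum>k\<le>n. M k))"
    have "M k \<le> (\<Sum>k\<le>n. M k)" if "k \<le> n" for k
      using that by (intro member_le_sum) auto
    then have "n \<in> S t" unfolding S_def t_def by fastforce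
    then show "\<exists>t. n \<le> rho t" using rhoge by blast
  qed
  moreover have "\<forall>x\<in>carrier G. \<forall>w\<in>carrier G. nrm w \<le> rho (nrm x) \<longrightarrow> (\<forall>i<N. (x \<otimes> w \<in> A i) = (x \<in> A i))"
  proof (intro ballI impI allI)
    fix x w i assume x: "x \<in> carrier G" and w: "w \<in> carrier G" and nw: "nrm w \<le> rho (nrm x)" and i: "i < N"
    show "(x \<otimes> w \<in> A i) = (x \<in> A i)"
    proof (cases "rho (nrm x) = 0")
      case True
      then have "w = \<one>" using nzero w nw by simp
      then show ?thesis using x by simp
    next
      case False
      then have "M (rho (nrm x)) < nrm x" using rhoS[of "nrm x"] unfolding S_def by auto
      moreover have "w \<in> ball (rho (nrm x))" unfolding ball_def using w nw by simp
      ultimately show ?thesis using M[of x "rho (nrm x)"] x i unfolding Bd_def by fastforce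
    qed
  qed
  ultimately show ?thesis by blast
qed

end


context group
begin

lemma ai_carrier: "almost_invariant G X \<Longrightarrow> X \<subseteq> carrier G"
  unfolding almost_invariant_def by simp

lemma ai_ltrans:
  assumes ai: "almost_invariant G X" and g: "g \<in> carrier G"
  shows "almost_invariant G ((\<lambda>y. g \<otimes> y) ` X)"
proof -
  let ?f = "\<lambda>y. g \<otimes> y"
  have X: "X \<subseteq> carrier G" using ai_carrier[OF ai] .
  have inj: "inj_on ?f (carrier G)" using g by (intro inj_onI) simp
  have "?f ` X \<subseteq> carrier G" using X g by auto
  moreover have "finite ((?f ` X - (?f ` X #> h)) \<union> ((?f ` X #> h) - ?f ` X))" if h: "h \<in> carrier G" for h
  proof -
    have eq: "?f ` X #> h = ?f ` (X #> h)"
    proof -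
      have "?f ` X #> h = (\<lambda>y. (g \<otimes> y) \<otimes> h) ` X" by (simp add: rcos_img image_image)
      also have "\<dots> = (\<lambda>y. g \<otimes> (y \<otimes> h)) ` X"
        using X g h by (intro image_cong) (auto simp: m_assoc)
      also have "\<dots> = ?f ` (X #> h)" by (simp add: rcos_img image_image)
      finally show ?thesis .
    qed
    have Xh: "X #> h \<subseteq> carrier G" using X h by (auto simp: rcos_img)
    have e1: "?f ` X - ?f ` (X #> h) = ?f ` (X - (X #> h))"
      using inj X Xh by (intro inj_on_image_set_diff[symmetric]) auto
    have e2: "?f ` (X #> h) - ?f ` X = ?f ` ((X #> h) - X)"
      using inj X Xh by (intro inj_on_image_set_diff[symmetric]) auto
    show ?thesis unfolding eq e1 e2
      using ai_fin1[OF ai h] ai_fin2[OF ai h] by simp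
  qed
  ultimately show ?thesis unfolding almost_invariant_def by blast
qed

lemma ai_diff:
  assumes a: "almost_invariant G A" and b: "almost_invariant G B"
  shows "almost_invariant G (A - B)"
proof -
  have A: "A \<subseteq> carrier G" using ai_carrier[OF a] .
  have B: "B \<subseteq> carrier G" using ai_carrier[OF b] .
  have "finite (((A - B) - ((A - B) #> h)) \<union> (((A - B) #> h) - (A - B)))" if h: "h \<in> carrier G" for h
  proof -
    have inj: "inj_on (\<lambda>y. y \<otimes> h) (carrier G)" using h by (intro inj_onI) simp
    have eq: "(A - B) #> h = (A #> h) - (B #> h)"
      unfolding rcos_img using inj A B by (intro inj_on_image_set_diff) auto
    have "((A - B) - ((A - B) #> h)) \<union> (((A - B) #> h) - (A - B)) \<subseteq>
       (A - (A #> h)) \<union> ((A #> h) - A) \<union> (B - (B #> h)) \<union> ((B #> h) - B)"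
      unfolding eq by blast
    moreover have "finite ((A - (A #> h)) \<union> ((A #> h) - A) \<union> (B - (B #> h)) \<union> ((B #> h) - B))"
      using ai_fin1[OF a h] ai_fin2[OF a h] ai_fin1[OF b h] ai_fin2[OF b h] by simp
    ultimately show ?thesis by (rule finite_subset)
  qed
  then show ?thesis using A unfolding almost_invariant_def by blast
qed

end

locale ends_ctx = group G for G (structure) +
  fixes nrm :: "'a \<Rightarrow> nat" and rho :: "nat \<Rightarrow> nat" and N :: nat and A :: "nat \<Rightarrow> 'a set"
  assumes nrm_inv: "x \<in> carrier G \<Longrightarrow> nrm (inv x) = nrm x"
  and nrm_mult: "x \<in> carrier G \<Longrightarrow> y \<in> carrier G \<Longrightarrow> nrm (x \<otimes> y) \<le> nrm x + nrm y"
  and nrm_fin: "finite {x\<in>carrier G. nrm x \<le> n}"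
  and rho_mono: "mono rho" and rho_le: "rho t \<le> t" and rho_unb: "\<exists>t. n \<le> rho t"
  and resp: "x \<in> carrier G \<Longrightarrow> w \<in> carrier G \<Longrightarrow> nrm w \<le> rho (nrm x) \<Longrightarrow> i < N \<Longrightarrow>
      (x \<otimes> w \<in> A i) = (x \<in> A i)"
  and Aai: "i < N \<Longrightarrow> almost_invariant G (A i)"
  and Ainf: "i < N \<Longrightarrow> infinite (A i)"
  and Adisj: "i < N \<Longrightarrow> j < N \<Longrightarrow> i \<noteq> j \<Longrightarrow> A i \<inter> A j = {}"
  and atom: "i < N \<Longrightarrow> Y \<subseteq> A i \<Longrightarrow> almost_invariant G Y \<Longrightarrow> finite Y \<or> finite (A i - Y)"
  and N3: "3 \<le> N"
begin

definition rho2 :: "nat \<Rightarrow> nat" where "rho2 u = rho (rho (u div 2))"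

lemma rho_monoD: "a \<le> b \<Longrightarrow> rho a \<le> rho b"
  using rho_mono by (simp add: monoD)

lemma rho2_monoD: "a \<le> b \<Longrightarrow> rho2 a \<le> rho2 b"
  unfolding rho2_def by (intro rho_monoD) (simp add: div_le_mono)

lemma rho2_le: "rho2 u \<le> rho u"
proof -
  have "rho (u div 2) \<le> u" using rho_le[of "u div 2"] by simp
  then show ?thesis unfolding rho2_def by (rule rho_monoD)
qed

lemma rho2_unb: "\<exists>u. n \<le> rho2 u"
proof -
  obtain t1 where t1: "n \<le> rho t1" using rho_unb by blast
  obtain t2 where t2: "t1 \<le> rho t2" using rho_unb by blast
  have "n \<le> rho (rho t2)" using t1 rho_monoD[OF t2] by simp
  then have "n \<le> rho2 (2 * t2)" unfolding rho2_def by simp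
  then show ?thesis by blast
qed

lemma rho2_key: assumes "rho t \<le> s" shows "rho2 (t + s) \<le> rho s"
proof (cases "t \<le> s")
  case True
  then have "(t + s) div 2 \<le> s" by simp
  then have "rho2 (t + s) \<le> rho (rho s)" unfolding rho2_def by (intro rho_monoD)
  also have "\<dots> \<le> rho s" using rho_le[of s] by (rule rho_monoD)
  finally show ?thesis .
next
  case False
  then have "(t + s) div 2 \<le> t" by simp
  then have "rho2 (t + s) \<le> rho (rho t)" unfolding rho2_def by (intro rho_monoD)
  also have "\<dots> \<le> rho s" using assms by (rule rho_monoD)
  finally show ?thesis .
qed

lemma nrm_sub: "x \<in> carrier G \<Longrightarrow> y \<in> carrier G \<Longrightarrow> nrm x \<le> nrm (x \<otimes> y) + nrm y"
proof -
  assume x: "x \<in> carrier G" and y: "y \<in> carrier G"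
  have "x = (x \<otimes> y) \<otimes> inv y" using x y by (simp add: m_assoc)
  then have "nrm x = nrm ((x \<otimes> y) \<otimes> inv y)" by simp
  also have "\<dots> \<le> nrm (x \<otimes> y) + nrm (inv y)" using x y by (intro nrm_mult) auto
  finally show ?thesis using nrm_inv[OF y] by simp
qed

definition Ed :: "'a \<Rightarrow> 'a \<Rightarrow> bool" where
  "Ed x y \<longleftrightarrow> x \<in> carrier G \<and> y \<in> carrier G \<and> nrm (inv x \<otimes> y) \<le> rho2 (min (nrm x) (nrm y))"

lemma Ed_sym: "Ed x y \<Longrightarrow> Ed y x"
proof -
  assume e: "Ed x y"
  then have x: "x \<in> carrier G" and y: "y \<in> carrier G" unfolding Ed_def by auto
  have "inv y \<otimes> x = inv (inv x \<otimes> y)" using x y by (simp add: inv_mult_group)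
  then have "nrm (inv y \<otimes> x) = nrm (inv x \<otimes> y)" using x y nrm_inv by simp
  then show ?thesis using e unfolding Ed_def by (simp add: min.commute)
qed

definition closedE :: "'a set \<Rightarrow> bool" where
  "closedE U \<longleftrightarrow> U \<subseteq> carrier G \<and> (\<forall>x y. Ed x y \<longrightarrow> x \<in> U \<longrightarrow> y \<in> U)"

lemma closed_ai: assumes c: "closedE U" shows "almost_invariant G U"
proof -
  have U: "U \<subseteq> carrier G" using c unfolding closedE_def by simp
  have cl: "Ed x y \<Longrightarrow> x \<in> U \<Longrightarrow> y \<in> U" for x y using c unfolding closedE_def by blast
  have "finite ((U - (U #> h)) \<union> ((U #> h) - U))" if h: "h \<in> carrier G" for h
  proof -
    obtain T where T: "nrm h \<le> rho2 T" using rho2_unb by blast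
    define B where "B = {x\<in>carrier G. nrm x \<le> T + nrm h}"
    have Bfin: "finite B" unfolding B_def by (rule nrm_fin)
    have edge: "Ed x y" if x: "x \<in> carrier G" and y: "y \<in> carrier G" and "T \<le> nrm x" "T \<le> nrm y"
       and n: "nrm (inv x \<otimes> y) \<le> nrm h" for x y
    proof -
      have "rho2 T \<le> rho2 (min (nrm x) (nrm y))" using that by (intro rho2_monoD) simp
      then show ?thesis unfolding Ed_def using x y n T by linarith
    qed
    have s1: "U - (U #> h) \<subseteq> B"
    proof
      fix y assume yy: "y \<in> U - (U #> h)"
      then have y: "y \<in> carrier G" using U by auto
      show "y \<in> B"
      proof (rule ccontr)
        assume "y \<notin> B"
        then have ny: "T + nrm h < nrm y" using y unfolding B_def by simp
        define z where "z = y \<otimes> inv h"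
        have z: "z \<in> carrier G" unfolding z_def using y h by simp
        have yz: "y = z \<otimes> h" unfolding z_def using y h by (simp add: m_assoc)
        have "nrm y \<le> nrm z + nrm h" using yz nrm_mult[OF z h] by simp
        then have "T \<le> nrm z" using ny by linarith
        moreover have "inv y \<otimes> z = inv h" unfolding z_def using y h by (simp add: m_assoc[symmetric])
        ultimately have "Ed y z" using edge[OF y z] ny nrm_inv[OF h] by simp
        then have "z \<in> U" using cl yy by blast
        then have "y \<in> U #> h" using yz by (auto simp: rcos_img)
        then show False using yy by simp
      qed
    qed
    have s2: "(U #> h) - U \<subseteq> (\<lambda>x. x \<otimes> h) ` B"
    proof
      fix y assume yy: "y \<in> (U #> h) - U"
      then obtain x where x: "x \<in> U" and yx: "y = x \<otimes> h" by (auto simp: rcos_img)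
      have xc: "x \<in> carrier G" using x U by auto
      have yc: "y \<in> carrier G" using xc h yx by simp
      have "x \<in> B"
      proof (rule ccontr)
        assume "x \<notin> B"
        then have nx: "T + nrm h < nrm x" using xc unfolding B_def by simp
        have "nrm x \<le> nrm y + nrm h" using nrm_sub[OF xc h] yx by simp
        then have "T \<le> nrm y" using nx by linarith
        moreover have "inv x \<otimes> y = h" using yx xc h by (simp add: m_assoc[symmetric])
        ultimately have "Ed x y" using edge[OF xc yc] nx by simp
        then have "y \<in> U" using cl x by blast
        then show False using yy by simp
      qed
      then show "y \<in> (\<lambda>x. x \<otimes> h) ` B" using yx by blast
    qed
    show ?thesis using s1 s2 Bfin by (meson finite_Un finite_imageI finite_subset)
  qed
  then show ?thesis using U unfolding almost_invariant_def by blast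
qed

lemma Ed_resp: assumes e: "Ed x y" and i: "i < N" shows "(y \<in> A i) = (x \<in> A i)"
proof -
  have x: "x \<in> carrier G" and y: "y \<in> carrier G" using e unfolding Ed_def by auto
  have "nrm (inv x \<otimes> y) \<le> rho2 (min (nrm x) (nrm y))" using e unfolding Ed_def by simp
  also have "\<dots> \<le> rho2 (nrm x)" by (intro rho2_monoD) simp
  also have "\<dots> \<le> rho (nrm x)" by (rule rho2_le)
  finally have "(x \<otimes> (inv x \<otimes> y) \<in> A i) = (x \<in> A i)" using x y i by (intro resp) auto
  moreover have "x \<otimes> (inv x \<otimes> y) = y" using x y by (simp add: m_assoc[symmetric])
  ultimately show ?thesis by simp
qed

definition comp :: "'a \<Rightarrow> 'a set" where "comp z = {y. Ed\<^sup>*\<^sup>* z y}"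

lemma comp_carrier: "z \<in> carrier G \<Longrightarrow> y \<in> comp z \<Longrightarrow> y \<in> carrier G"
  unfolding comp_def
proof -
  assume z: "z \<in> carrier G" and "y \<in> {y. Ed\<^sup>*\<^sup>* z y}"
  then have "Ed\<^sup>*\<^sup>* z y" by simp
  then show "y \<in> carrier G"
    by (induct rule: rtranclp_induct) (auto simp: z Ed_def)
qed

lemma comp_self: "z \<in> comp z" unfolding comp_def by simp

lemma comp_closed: "z \<in> carrier G \<Longrightarrow> closedE (comp z)"
  unfolding closedE_def using comp_carrier
  by (auto simp: comp_def intro: rtranclp.rtrancl_into_rtrancl)

lemma comp_sub: assumes "z \<in> A i" "i < N" shows "comp z \<subseteq> A i"
proof
  fix y assume "y \<in> comp z"
  then have "Ed\<^sup>*\<^sup>* z y" unfolding comp_def by simp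
  then show "y \<in> A i"
    by (induct rule: rtranclp_induct) (use assms Ed_resp in blast)+
qed

lemma rtr_sym: "Ed\<^sup>*\<^sup>* x y \<Longrightarrow> Ed\<^sup>*\<^sup>* y x"
proof (induct rule: rtranclp_induct)
  case base then show ?case by simp
next
  case (step y z)
  then have "Ed z y" using Ed_sym by blast
  then show ?case using step(3) by (rule converse_rtranclp_into_rtranclp)
qed

lemma comp_eq: "y \<in> comp z \<Longrightarrow> comp y = comp z"
proof -
  assume "y \<in> comp z"
  then have zy: "Ed\<^sup>*\<^sup>* z y" unfolding comp_def by simp
  then have yz: "Ed\<^sup>*\<^sup>* y z" by (rule rtr_sym)
  show ?thesis unfolding comp_def
    using zy yz by (auto intro: rtranclp_trans)
qed

end



context ends_ctx
begin

lemma A_carrier: "i < N \<Longrightarrow> A i \<subseteq> carrier G"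
  using Aai ai_carrier by blast

lemma closed_Union: "(\<And>U. U \<in> F \<Longrightarrow> closedE U) \<Longrightarrow> closedE (\<Union>F)"
  unfolding closedE_def by blast

lemma infinite_comp: assumes i: "i < N" shows "\<exists>z\<in>A i. infinite (comp z)"
proof (rule ccontr)
  assume "\<not> ?thesis"
  then have fc: "\<And>z. z \<in> A i \<Longrightarrow> finite (comp z)" by blast
  have Ac: "A i \<subseteq> carrier G" using A_carrier[OF i] .
  define C where "C = comp ` A i"
  have UC: "\<Union>C = A i"
  proof
    show "\<Union>C \<subseteq> A i" unfolding C_def using comp_sub[OF _ i] by blast
    show "A i \<subseteq> \<Union>C" unfolding C_def using comp_self by blast
  qed
  have "infinite C"
  proof
    assume "finite C"
    moreover have "\<And>c. c \<in> C \<Longrightarrow> finite c" unfolding C_def using fc by blast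
    ultimately have "finite (\<Union>C)" by (rule finite_Union)
    then show False using UC Ainf[OF i] by simp
  qed
  then obtain f :: "nat \<Rightarrow> 'a set" where f: "inj f" "range f \<subseteq> C"
    using infinite_countable_subset by blast
  define D where "D = range (f \<circ> (\<lambda>n. 2 * n))"
  define E where "E = range (f \<circ> (\<lambda>n. 2 * n + 1))"
  have injD: "inj (f \<circ> (\<lambda>n. 2 * n))" using f(1) by (intro inj_compose) (auto simp: inj_def)
  have injE: "inj (f \<circ> (\<lambda>n. 2 * n + 1))" using f(1) by (intro inj_compose) (auto simp: inj_def)
  have Dinf: "infinite D" unfolding D_def using range_inj_infinite[OF injD] .
  have Einf: "infinite E" unfolding E_def using range_inj_infinite[OF injE] .
  have DC: "D \<subseteq> C" "E \<subseteq> C" unfolding D_def E_def using f(2) by auto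
  define Y where "Y = \<Union>D"
  have Yc: "closedE Y" unfolding Y_def
  proof (rule closed_Union)
    fix U assume "U \<in> D"
    then obtain z where "z \<in> A i" "U = comp z" using DC unfolding C_def by blast
    then show "closedE U" using comp_closed Ac by blast
  qed
  have YA: "Y \<subseteq> A i" unfolding Y_def using DC UC by blast
  have Yinf: "infinite Y" unfolding Y_def using Dinf finite_UnionD by blast
  have EY: "\<Union>E \<subseteq> A i - Y"
  proof
    fix x assume "x \<in> \<Union>E"
    then obtain n where xn: "x \<in> f (2 * n + 1)" unfolding E_def by auto
    have "x \<in> A i" using xn f(2) UC by blast
    moreover have "x \<notin> Y"
    proof
      assume "x \<in> Y"
      then obtain m where xm: "x \<in> f (2 * m)" unfolding Y_def D_def by auto
      obtain a where a: "f (2 * n + 1) = comp a" using f(2) unfolding C_def by blast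
      obtain b where b: "f (2 * m) = comp b" using f(2) unfolding C_def by blast
      have "comp x = comp a" using xn a comp_eq by simp
      moreover have "comp x = comp b" using xm b comp_eq by simp
      ultimately have "f (2 * n + 1) = f (2 * m)" using a b by simp
      then have "2 * n + 1 = 2 * m" using f(1) by (simp add: inj_def)
      then show False by presburger
    qed
    ultimately show "x \<in> A i - Y" by simp
  qed
  have "infinite (A i - Y)" using Einf EY finite_UnionD finite_subset by metis
  then show False using atom[OF i YA closed_ai[OF Yc]] Yinf by simp
qed

lemma key:
  assumes g: "g \<in> carrier G" and ga: "g \<in> A a" and a: "a < N" and k: "k < N"
    and gk: "inv g \<notin> A k" and z: "z \<in> A k" and nz: "nrm z \<le> rho (nrm g)"
    and y: "y \<in> comp z"
  shows "g \<otimes> y \<in> A a"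
proof -
  have zc: "z \<in> carrier G" using z A_carrier[OF k] by blast
  have "Ed\<^sup>*\<^sup>* z y" using y unfolding comp_def by simp
  then show ?thesis
  proof (induct rule: rtranclp_induct)
    case base
    show ?case using resp[OF g zc nz a] ga by simp
  next
    case (step x y)
    have xz: "x \<in> comp z" using step(1) unfolding comp_def by simp
    have xk: "x \<in> A k" using comp_sub[OF z k] xz by blast
    have x: "x \<in> carrier G" and yc: "y \<in> carrier G" using step(2) unfolding Ed_def by auto
    define s where "s = nrm (g \<otimes> x)"
    define t where "t = nrm g"
    have gx: "g \<otimes> x \<in> carrier G" using g x by simp
    have ts: "rho t \<le> s"
    proof (rule ccontr)
      assume "\<not> rho t \<le> s"
      then have "nrm (g \<otimes> x) \<le> rho (nrm (inv g))" unfolding s_def t_def using nrm_inv[OF g] by simp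
      then have "(inv g \<otimes> (g \<otimes> x) \<in> A k) = (inv g \<in> A k)"
        using resp[OF inv_closed[OF g] gx _ k] by simp
      moreover have "inv g \<otimes> (g \<otimes> x) = x" using g x by (simp add: m_assoc[symmetric])
      ultimately show False using xk gk by simp
    qed
    have "x = inv g \<otimes> (g \<otimes> x)" using g x by (simp add: m_assoc[symmetric])
    then have "nrm x \<le> nrm (inv g) + nrm (g \<otimes> x)" using nrm_mult[OF inv_closed[OF g] gx] by simp
    then have nx: "nrm x \<le> t + s" unfolding s_def t_def using nrm_inv[OF g] by simp
    have "nrm (inv x \<otimes> y) \<le> rho2 (min (nrm x) (nrm y))" using step(2) unfolding Ed_def by simp
    also have "\<dots> \<le> rho2 (t + s)" using nx by (intro rho2_monoD) simp
    also have "\<dots> \<le> rho s" using rho2_key[OF ts] .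
    finally have "((g \<otimes> x) \<otimes> (inv x \<otimes> y) \<in> A a) = (g \<otimes> x \<in> A a)"
      using resp[OF gx _ _ a] x yc unfolding s_def by simp
    moreover have "(g \<otimes> x) \<otimes> (inv x \<otimes> y) = g \<otimes> y"
      using g x yc by (simp add: m_assoc[symmetric]) (simp add: m_assoc)
    ultimately show ?case using step(3) by simp
  qed
qed

theorem contradiction: False
proof -
  have "\<forall>i. \<exists>x. i < N \<longrightarrow> x \<in> A i \<and> infinite (comp x)" using infinite_comp by blast
  then obtain z where z: "\<And>i. i < N \<Longrightarrow> z i \<in> A i \<and> infinite (comp (z i))" by metis
  define R where "R = Max (nrm ` z ` {..<N})"
  have R: "i < N \<Longrightarrow> nrm (z i) \<le> R" for i unfolding R_def by (intro Max_ge) auto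
  obtain T where T: "R \<le> rho T" using rho_unb by blast
  have N0: "0 < N" using N3 by simp
  have "infinite (A 0 - {x\<in>carrier G. nrm x \<le> T})"
    using Diff_infinite_finite[OF nrm_fin[of T] Ainf[OF N0]] .
  then have "A 0 - {x\<in>carrier G. nrm x \<le> T} \<noteq> {}" by (metis finite.emptyI)
  then obtain g where gA: "g \<in> A 0" and gT0: "g \<notin> {x\<in>carrier G. nrm x \<le> T}" by blast
  have gc: "g \<in> carrier G" using gA A_carrier[OF N0] by blast
  have gT: "\<not> nrm g \<le> T" using gT0 gc by simp
  have nz: "i < N \<Longrightarrow> nrm (z i) \<le> rho (nrm g)" for i
    using R T rho_monoD[of T "nrm g"] gT by fastforce
  obtain i j where ij: "i < N" "j < N" "i \<noteq> j" "inv g \<notin> A i" "inv g \<notin> A j"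
  proof -
    have d01: "A 0 \<inter> A 1 = {}" and d02: "A 0 \<inter> A 2 = {}" and d12: "A 1 \<inter> A 2 = {}"
      using Adisj N3 by auto
    show ?thesis
    proof (cases "inv g \<in> A 0")
      case True
      then show ?thesis using that[of 1 2] d01 d02 N3 by auto
    next
      case False
      show ?thesis
      proof (cases "inv g \<in> A 1")
        case True
        then show ?thesis using that[of 0 2] False d01 d12 N3 by auto
      next
        case F2: False
        then show ?thesis using that[of 0 1] False N3 by auto
      qed
    qed
  qed
  define f where "f = (\<lambda>y. g \<otimes> y)"
  have injf: "inj_on f (carrier G)" unfolding f_def using gc by (intro inj_onI) simp
  have sub: "f ` comp (z k) \<subseteq> A 0" if k: "k < N" "inv g \<notin> A k" for k
    unfolding f_def using key[OF gc gA N0 k(1) k(2)] z[OF k(1)] nz[OF k(1)] by blast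
  have fin: "finite (A 0 - f ` comp (z k))" if k: "k < N" "inv g \<notin> A k" for k
  proof -
    have zc: "z k \<in> carrier G" using z[OF k(1)] A_carrier[OF k(1)] by blast
    have ai: "almost_invariant G (f ` comp (z k))"
      unfolding f_def using ai_ltrans[OF closed_ai[OF comp_closed[OF zc]] gc] .
    have cc: "comp (z k) \<subseteq> carrier G" using comp_carrier[OF zc] by blast
    have "infinite (f ` comp (z k))"
      using z[OF k(1)] finite_imageD[OF _ inj_on_subset[OF injf cc]] by blast
    then show ?thesis using atom[OF N0 sub[OF k] ai] by blast
  qed
  have disj: "f ` comp (z i) \<inter> f ` comp (z j) = {}"
  proof -
    have zi: "z i \<in> carrier G" using z[OF ij(1)] A_carrier[OF ij(1)] by blast
    have zj: "z j \<in> carrier G" using z[OF ij(2)] A_carrier[OF ij(2)] by blast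
    have "comp (z i) \<inter> comp (z j) = {}"
      using comp_sub[of "z i" i] comp_sub[of "z j" j] z ij Adisj[OF ij(1) ij(2) ij(3)] by blast
    moreover have "comp (z i) \<union> comp (z j) \<subseteq> carrier G" using comp_carrier zi zj by blast
    ultimately show ?thesis using injf by (simp add: inj_on_image_Int[symmetric])
  qed
  have "A 0 \<subseteq> (A 0 - f ` comp (z i)) \<union> (A 0 - f ` comp (z j))" using disj by blast
  then have "finite (A 0)" using fin[OF ij(1) ij(4)] fin[OF ij(2) ij(5)] by (meson finite_Un finite_subset)
  then show False using Ainf[OF N0] by simp
qed

end



theorem theorem5p10:
  fixes G :: "('a, 'b) monoid_scheme"
  assumes "group G" and "countable (carrier G)"
  shows "num_ends G = \<infinity> \<or> num_ends G \<le> 2"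
proof (rule ccontr)
  interpret group G by fact
  assume H: "\<not> (num_ends G = \<infinity> \<or> num_ends G \<le> 2)"
  have inf: "infinite (carrier G)"
  proof
    assume "finite (carrier G)"
    then have "num_ends G = 0" unfolding num_ends_def by simp
    then show False using H by simp
  qed
  define P where "P n = (\<exists>A :: nat \<Rightarrow> 'a set.
        (\<forall>i<n. almost_invariant G (A i) \<and> infinite (A i)) \<and>
        (\<forall>i<n. \<forall>j<n. i \<noteq> j \<longrightarrow> A i \<inter> A j = {}))" for n
  have ne: "num_ends G = Sup {enat n | n. P n}" unfolding num_ends_def P_def using inf by simp
  obtain m where m: "num_ends G = enat m" using H by (cases "num_ends G") auto
  have bound: "P n \<Longrightarrow> n \<le> m" for n
  proof -
    assume "P n"
    then have "enat n \<le> Sup {enat n | n. P n}" by (intro Sup_upper) blast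
    then have "enat n \<le> enat m" using ne m by simp
    then show "n \<le> m" by simp
  qed
  have "\<exists>n. P n \<and> 3 \<le> n"
  proof (rule ccontr)
    assume "\<not> ?thesis"
    then have "\<And>n. P n \<Longrightarrow> n \<le> 2" by fastforce
    then have "Sup {enat n | n. P n} \<le> 2"
      by (intro Sup_least) (auto simp: numeral_eq_enat)
    then show False using H ne by simp
  qed
  then obtain n0 where n0: "P n0" "3 \<le> n0" by blast
  define Nn where "Nn = (GREATEST n. P n)"
  have PN: "P Nn" unfolding Nn_def using n0(1) bound by (rule GreatestI_nat[where b=m and P=P])
  have geN: "n \<le> Nn" if "P n" for n unfolding Nn_def by (rule Greatest_le_nat[where b=m and P=P, OF that bound])
  have N3: "3 \<le> Nn" using geN[OF n0(1)] n0(2) by simp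
  have notP: "\<not> P (Suc Nn)" using geN by fastforce
  obtain A where Aai: "\<And>i. i < Nn \<Longrightarrow> almost_invariant G (A i)"
    and Ainf: "\<And>i. i < Nn \<Longrightarrow> infinite (A i)"
    and Adisj: "\<And>i j. i < Nn \<Longrightarrow> j < Nn \<Longrightarrow> i \<noteq> j \<Longrightarrow> A i \<inter> A j = {}"
    using PN unfolding P_def by blast
  have atom: "finite Y \<or> finite (A i - Y)"
    if i: "i < Nn" and Y: "Y \<subseteq> A i" and aiY: "almost_invariant G Y" for i Y
  proof (rule ccontr)
    assume "\<not> ?thesis"
    then have Yinf: "infinite Y" and Dinf: "infinite (A i - Y)" by auto
    define B where "B k = (if k = i then Y else if k = Nn then A i - Y else A k)" for k
    have "P (Suc Nn)" unfolding P_def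
    proof (intro exI[of _ B] conjI allI impI)
      fix k assume k: "k < Suc Nn"
      show "almost_invariant G (B k)"
        using k aiY Aai[OF i] ai_diff[OF Aai[OF i] aiY] Aai unfolding B_def by auto
      show "infinite (B k)"
        using k Yinf Dinf Ainf unfolding B_def by auto
    next
      fix k l assume k: "k < Suc Nn" and l: "l < Suc Nn" and kl: "k \<noteq> l"
      define mp where "mp x = (if x = Nn then i else x)" for x
      have Bs: "x < Suc Nn \<Longrightarrow> B x \<subseteq> A (mp x)" for x unfolding B_def mp_def using Y by auto
      have mpl: "x < Suc Nn \<Longrightarrow> mp x < Nn" for x unfolding mp_def using i by auto
      show "B k \<inter> B l = {}"
      proof (cases "mp k = mp l")
        case False
        then show ?thesis using Adisj[OF mpl[OF k] mpl[OF l]] Bs[OF k] Bs[OF l] by blast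
      next
        case True
        then have "(k = i \<and> l = Nn) \<or> (k = Nn \<and> l = i)" using kl i unfolding mp_def
          by (auto split: if_splits)
        then show ?thesis unfolding B_def using i by auto
      qed
    qed
    then show False using notP by simp
  qed
  obtain nrm :: "'a \<Rightarrow> nat" where
    n1: "\<forall>x\<in>carrier G. nrm (inv\<^bsub>G\<^esub> x) = nrm x" and
    n2: "\<forall>x\<in>carrier G. \<forall>y\<in>carrier G. nrm (x \<otimes>\<^bsub>G\<^esub> y) \<le> nrm x + nrm y" and
    n3: "\<forall>n. finite {x\<in>carrier G. nrm x \<le> n}" and
    n4: "\<forall>x\<in>carrier G. nrm x = 0 \<longrightarrow> x = \<one>\<^bsub>G\<^esub>"
    using exists_norm[OF assms(2)] by blast
  obtain rho where r1: "mono rho" and r2: "\<forall>t. rho t \<le> t" and r3: "\<forall>n. \<exists>t. n \<le> rho t"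
    and r4: "\<forall>x\<in>carrier G. \<forall>w\<in>carrier G. nrm w \<le> rho (nrm x) \<longrightarrow> (\<forall>i<Nn. (x \<otimes>\<^bsub>G\<^esub> w \<in> A i) = (x \<in> A i))"
    using exists_rho[of nrm Nn A] n3 n4 Aai by blast
  interpret E: ends_ctx G nrm rho Nn A
    by unfold_locales (use n1 n2 n3 r1 r2 r3 r4 Aai Ainf Adisj atom N3 in auto)
  show False by (rule E.contradiction)
qed

end
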